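(* Let $p$ be a state of a pDFA $\mathcal{A}$ and let $q$ be a state of a pDFA $\mathcal{B}$. Then the rooted involutive graphs $\Gamma(p)$ and $\Gamma(q)$ are isomorphic as rooted involutive graphs (not considering node labels) if and only if $\mathscr{L}(p)=\mathscr{L}(q)$.
   Context: A pDFA (partial deterministic finite automaton) over a finite alphabet $A$ is a finite $A$-edge-labeled directed graph $(Q,T)$, $T\subseteq Q\times A\times Q$, such that from each state there is at most one transition with any given label. For a state $p$, $\mathscr{L}(p)\subseteq A^*$ is the set of words labeling a run (finite path) starting in $p$. The graph $\Gamma(p)$ has as nodes the runs starting in $p$ (equivalently the words in $\mathscr{L}(p)$), root the empty run, and an edge from $\varrho$ to $\varrho\tau$ labeled by the label $a$ of the transition $\tau$, together with all inverse edges from $\varrho\tau$ to $\varrho$ labeled $a^{-1}$ (using the involutive alphabet $A^{\pm1}$ if $A$ is not involutive). An isomorphism of rooted edge-labeled graphs is a bijection on nodes preserving the root and preserving and reflecting labeled edges. *)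

theory Defs
  imports Main
begin

definition pDFA :: "'q set \<Rightarrow> 'a set \<Rightarrow> ('q \<times> 'a \<times> 'q) set \<Rightarrow> bool" where
  "pDFA Q A T \<longleftrightarrow> finite Q \<and> finite A \<and> T \<subseteq> Q \<times> A \<times> Q \<and>
     (\<forall>p a q q'. (p, a, q) \<in> T \<longrightarrow> (p, a, q') \<in> T \<longrightarrow> q = q')"

fun is_run :: "('q \<times> 'a \<times> 'q) set \<Rightarrow> 'q \<Rightarrow> ('q \<times> 'a \<times> 'q) list \<Rightarrow> bool" where
  "is_run T p [] = True"
| "is_run T p ((p', a, q) # rs) = (p' = p \<and> (p, a, q) \<in> T \<and> is_run T q rs)"

definition runs :: "('q \<times> 'a \<times> 'q) set \<Rightarrow> 'q \<Rightarrow> ('q \<times> 'a \<times> 'q) list set" where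
  "runs T p = {\<rho>. is_run T p \<rho>}"

definition tlabel :: "'q \<times> 'a \<times> 'q \<Rightarrow> 'a" where
  "tlabel \<tau> = fst (snd \<tau>)"

definition lang :: "('q \<times> 'a \<times> 'q) set \<Rightarrow> 'q \<Rightarrow> 'a list set" where
  "lang T p = {map tlabel \<rho> | \<rho>. \<rho> \<in> runs T p}"

text \<open>Involutive alphabet: (a, True) stands for a, (a, False) for its formal inverse a^-1.
  A rooted edge-labeled graph is a triple (nodes, labeled edges, root).\<close>
type_synonym ('v, 'l) rgraph = "'v set \<times> ('v \<times> 'l \<times> 'v) set \<times> 'v"

definition Gamma_edges :: "('q \<times> 'a \<times> 'q) set \<Rightarrow> 'q \<Rightarrow>
    (('q \<times> 'a \<times> 'q) list \<times> ('a \<times> bool) \<times> ('q \<times> 'a \<times> 'q) list) set" where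
  "Gamma_edges T p =
     {(\<rho>, (tlabel \<tau>, True), \<rho> @ [\<tau>]) | \<rho> \<tau>. \<rho> @ [\<tau>] \<in> runs T p} \<union>
     {(\<rho> @ [\<tau>], (tlabel \<tau>, False), \<rho>) | \<rho> \<tau>. \<rho> @ [\<tau>] \<in> runs T p}"

definition Gamma :: "('q \<times> 'a \<times> 'q) set \<Rightarrow> 'q \<Rightarrow> (('q \<times> 'a \<times> 'q) list, 'a \<times> bool) rgraph" where
  "Gamma T p = (runs T p, Gamma_edges T p, [])"

definition rgraph_iso :: "('v, 'l) rgraph \<Rightarrow> ('w, 'l) rgraph \<Rightarrow> bool" where
  "rgraph_iso G H \<longleftrightarrow> (case G of (V1, E1, r1) \<Rightarrow> case H of (V2, E2, r2) \<Rightarrow>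
     (\<exists>f. bij_betw f V1 V2 \<and> f r1 = r2 \<and>
        (\<forall>u\<in>V1. \<forall>v\<in>V1. \<forall>l. (u, l, v) \<in> E1 \<longleftrightarrow> (f u, l, f v) \<in> E2)))"

end

theory Submission
  imports Defs
begin

definition detT :: "('q \<times> 'a \<times> 'q) set \<Rightarrow> bool" where
  "detT T \<longleftrightarrow> (\<forall>p a q q'. (p, a, q) \<in> T \<longrightarrow> (p, a, q') \<in> T \<longrightarrow> q = q')"

lemma pDFA_det: "pDFA Q A T \<Longrightarrow> detT T"
  by (simp add: pDFA_def detT_def)

lemma run_prefix: "is_run T p (xs @ ys) \<Longrightarrow> is_run T p xs"
  by (induction xs arbitrary: p) auto

lemma run_inj: "detT T \<Longrightarrow> is_run T p r1 \<Longrightarrow> is_run T p r2 \<Longrightarrow>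
   map tlabel r1 = map tlabel r2 \<Longrightarrow> r1 = r2"
proof (induction r1 arbitrary: p r2)
  case Nil then show ?case by simp
next
  case (Cons t r1)
  obtain p1 a q1 where t: "t = (p1, a, q1)" by (cases t)
  from Cons.prems obtain t2 r2' where r2: "r2 = t2 # r2'" by (cases r2) auto
  obtain p2 b q2 where t2: "t2 = (p2, b, q2)" by (cases t2)
  from Cons.prems t r2 t2 have "a = b" "p1 = p" "p2 = p" by (auto simp: tlabel_def)
  with Cons.prems t r2 t2 have "q1 = q2" unfolding detT_def by auto
  with Cons.prems Cons.IH[of q1 r2'] t r2 t2 \<open>a = b\<close> \<open>p1 = p\<close> \<open>p2 = p\<close> show ?case by auto
qed

lemma edge_char:
  assumes "detT T" "u \<in> runs T p" "v \<in> runs T p"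
  shows "(u, (a, b), v) \<in> Gamma_edges T p \<longleftrightarrow>
     (b \<and> map tlabel v = map tlabel u @ [a]) \<or> (\<not> b \<and> map tlabel u = map tlabel v @ [a])"
proof
  assume "(u, (a, b), v) \<in> Gamma_edges T p"
  then show "(b \<and> map tlabel v = map tlabel u @ [a]) \<or> (\<not> b \<and> map tlabel u = map tlabel v @ [a])"
    unfolding Gamma_edges_def by auto
next
  assume h: "(b \<and> map tlabel v = map tlabel u @ [a]) \<or> (\<not> b \<and> map tlabel u = map tlabel v @ [a])"
  have key: "\<exists>\<tau>. y = x @ [\<tau>] \<and> tlabel \<tau> = a"
    if "x \<in> runs T p" "y \<in> runs T p" "map tlabel y = map tlabel x @ [a]" for x y
  proof -
    have ne: "y \<noteq> []" using that(3) by auto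
    then obtain y' \<tau> where y: "y = y' @ [\<tau>]" by (metis rev_exhaust)
    have "map tlabel y' = map tlabel x" "tlabel \<tau> = a" using that(3) y by auto
    moreover have "is_run T p y'" proof -
      have "is_run T p (y' @ [\<tau>])" using that(2) y by (simp add: runs_def)
      then show ?thesis by (rule run_prefix)
    qed
    ultimately have "y' = x" using run_inj[OF assms(1)] that(1) unfolding runs_def by auto
    then show ?thesis using y \<open>tlabel \<tau> = a\<close> by auto
  qed
  show "(u, (a, b), v) \<in> Gamma_edges T p"
  proof (cases b)
    case True
    with h key[of u v] assms obtain \<tau> where "v = u @ [\<tau>]" "tlabel \<tau> = a" by auto
    moreover have "(u, (tlabel \<tau>, True), u @ [\<tau>]) \<in> Gamma_edges T p"
      using assms(3) \<open>v = u @ [\<tau>]\<close> unfolding Gamma_edges_def by blast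
    ultimately show ?thesis using True by simp
  next
    case False
    with h key[of v u] assms obtain \<tau> where "u = v @ [\<tau>]" "tlabel \<tau> = a" by auto
    moreover have "(v @ [\<tau>], (tlabel \<tau>, False), v) \<in> Gamma_edges T p"
      using assms(2) \<open>u = v @ [\<tau>]\<close> unfolding Gamma_edges_def by blast
    ultimately show ?thesis using False by simp
  qed
qed

lemma nil_run: "[] \<in> runs T p" by (simp add: runs_def)

theorem fact3p7:
  fixes QA :: "'q set" and QB :: "'r set" and A :: "'a set"
    and TA :: "('q \<times> 'a \<times> 'q) set" and TB :: "('r \<times> 'a \<times> 'r) set"
  assumes "pDFA QA A TA" and "pDFA QB A TB" and "p \<in> QA" and "q \<in> QB"
  shows "rgraph_iso (Gamma TA p) (Gamma TB q) \<longleftrightarrow> lang TA p = lang TB q"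
proof
  have dA: "detT TA" and dB: "detT TB" using assms pDFA_det by blast+
  assume "rgraph_iso (Gamma TA p) (Gamma TB q)"
  then obtain f where bij: "bij_betw f (runs TA p) (runs TB q)" and f0: "f [] = []"
    and fe: "\<And>u v l. u \<in> runs TA p \<Longrightarrow> v \<in> runs TA p \<Longrightarrow>
        (u, l, v) \<in> Gamma_edges TA p \<longleftrightarrow> (f u, l, f v) \<in> Gamma_edges TB q"
    unfolding rgraph_iso_def Gamma_def by auto
  have w: "\<rho> \<in> runs TA p \<Longrightarrow> map tlabel (f \<rho>) = map tlabel \<rho>" for \<rho>
  proof (induction \<rho> rule: rev_induct)
    case Nil then show ?case using f0 by simp
  next
    case (snoc \<tau> \<rho>)
    have r: "\<rho> \<in> runs TA p" proof -
      have "is_run TA p (\<rho> @ [\<tau>])" using snoc.prems by (simp add: runs_def)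
      then show ?thesis using run_prefix by (simp add: runs_def)
    qed
    have "(\<rho>, (tlabel \<tau>, True), \<rho> @ [\<tau>]) \<in> Gamma_edges TA p"
      using snoc.prems unfolding Gamma_edges_def by blast
    then have "(f \<rho>, (tlabel \<tau>, True), f (\<rho> @ [\<tau>])) \<in> Gamma_edges TB q"
      using fe r snoc.prems by blast
    moreover have fr1: "f \<rho> \<in> runs TB q" using bij r bij_betwE by blast
    moreover have fr2: "f (\<rho> @ [\<tau>]) \<in> runs TB q"
      using bij snoc.prems bij_betwE by blast
    ultimately have "map tlabel (f (\<rho> @ [\<tau>])) = map tlabel (f \<rho>) @ [tlabel \<tau>]"
      using edge_char[OF dB fr1 fr2, of "tlabel \<tau>" True] by simp
    then show ?case using snoc.IH r by simp
  qed
  show "lang TA p = lang TB q"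
  proof
    show "lang TA p \<subseteq> lang TB q"
    proof
      fix x assume "x \<in> lang TA p"
      then obtain \<rho> where r: "\<rho> \<in> runs TA p" "x = map tlabel \<rho>" unfolding lang_def by auto
      have "f \<rho> \<in> runs TB q" using bij r(1) bij_betwE by blast
      moreover have "x = map tlabel (f \<rho>)" using w r by simp
      ultimately show "x \<in> lang TB q" unfolding lang_def by blast
    qed
    show "lang TB q \<subseteq> lang TA p"
    proof
      fix x assume "x \<in> lang TB q"
      then obtain \<sigma> where s: "\<sigma> \<in> runs TB q" "x = map tlabel \<sigma>" unfolding lang_def by auto
      then obtain \<rho> where "\<rho> \<in> runs TA p" "\<sigma> = f \<rho>" using bij
        by (metis bij_betw_imp_surj_on imageE)
      then show "x \<in> lang TA p" using w s unfolding lang_def by auto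
    qed
  qed
next
  have dA: "detT TA" and dB: "detT TB" using assms pDFA_det by blast+
  assume L: "lang TA p = lang TB q"
  define f :: "('q \<times> 'a \<times> 'q) list \<Rightarrow> ('r \<times> 'a \<times> 'r) list" where "f \<rho> = (THE \<sigma>. \<sigma> \<in> runs TB q \<and> map tlabel \<sigma> = map tlabel \<rho>)" for \<rho>
  have fprop: "f \<rho> \<in> runs TB q \<and> map tlabel (f \<rho>) = map tlabel \<rho>" if "\<rho> \<in> runs TA p" for \<rho>
  proof -
    have "map tlabel \<rho> \<in> lang TB q" using L that unfolding lang_def by auto
    then obtain \<sigma> where s: "\<sigma> \<in> runs TB q" "map tlabel \<sigma> = map tlabel \<rho>"
      unfolding lang_def by auto
    have "\<exists>!\<sigma>. \<sigma> \<in> runs TB q \<and> map tlabel \<sigma> = map tlabel \<rho>"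
      using s run_inj[OF dB] unfolding runs_def by (metis mem_Collect_eq)
    then show ?thesis unfolding f_def by (rule theI')
  qed
  have inj: "inj_on f (runs TA p)"
  proof (rule inj_onI)
    fix x y assume x: "x \<in> runs TA p" and y: "y \<in> runs TA p" and e: "f x = f y"
    have "map tlabel x = map tlabel y" using fprop[OF x] fprop[OF y] e by simp
    then show "x = y" using run_inj[OF dA, of p x y] x y by (simp add: runs_def)
  qed
  have surj: "f ` runs TA p = runs TB q"
  proof
    show "f ` runs TA p \<subseteq> runs TB q" using fprop by auto
    show "runs TB q \<subseteq> f ` runs TA p"
    proof
      fix \<sigma> assume s: "\<sigma> \<in> runs TB q"
      then have "map tlabel \<sigma> \<in> lang TA p" using L unfolding lang_def by auto
      then obtain \<rho> where r: "\<rho> \<in> runs TA p" "map tlabel \<rho> = map tlabel \<sigma>"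
        unfolding lang_def by auto
      then have "f \<rho> = \<sigma>" using fprop[OF r(1)] s run_inj[OF dB] unfolding runs_def by auto
      then show "\<sigma> \<in> f ` runs TA p" using r by blast
    qed
  qed
  have f0: "f [] = []"
    using fprop[OF nil_run] by simp
  have edges: "\<forall>u\<in>runs TA p. \<forall>v\<in>runs TA p. \<forall>l.
      (u, l, v) \<in> Gamma_edges TA p \<longleftrightarrow> (f u, l, f v) \<in> Gamma_edges TB q"
  proof (intro ballI allI)
    fix u v l assume u: "u \<in> runs TA p" and v: "v \<in> runs TA p"
    obtain a :: 'a and b :: bool where l: "l = (a, b)" by (cases l)
    show "(u, l, v) \<in> Gamma_edges TA p \<longleftrightarrow> (f u, l, f v) \<in> Gamma_edges TB q"
      unfolding l edge_char[OF dA u v] edge_char[OF dB conjunct1[OF fprop[OF u]] conjunct1[OF fprop[OF v]]]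
      using fprop[OF u] fprop[OF v] by simp
  qed
  show "rgraph_iso (Gamma TA p) (Gamma TB q)"
  proof -
    have "bij_betw f (runs TA p) (runs TB q)" using inj surj by (simp add: bij_betw_def)
    then show ?thesis unfolding rgraph_iso_def Gamma_def using f0 edges by simp blast
  qed
qed

end
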